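(* Let $\mathcal{R}$ be a commutative, associative real algebra with unit, $A\in M^{\infty\times\infty}_0(\mathcal{R})$ and $g\in\mathcal{R}^\infty_0[t]$. Consider the differential equation $\frac{df}{dt}=Af+g$ for $f\in\mathcal{R}^\infty_0[t]$. (i) If $A-I$ is strictly upper triangular, the equation has a unique solution, and its coefficients depend $\mathcal{R}$-linearly on the coefficients of $g$. (ii) If $A$ is strictly upper triangular, a solution is uniquely determined by its degree-zero term $f_0\in\mathcal{R}^\infty_0$; in fact the solution depends $\mathcal{R}$-linearly on $f_0$ and the coefficients of $g$.
   Context: $\mathcal{R}^\infty_0$ denotes finitely supported sequences in $\mathcal{R}$ indexed by positive integers; $M^{\infty\times\infty}_0(\mathcal{R})$ denotes infinite matrices indexed by positive integers each of whose columns has finitely many nonzero entries; $\mathcal{R}^\infty_0[t]$ denotes polynomials in $t$ with coefficients in $\mathcal{R}^\infty_0$. *)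

theory Defs
  imports Complex_Main
begin

text \<open>Sequences in R^infty_0 are represented as functions nat => 'a (index i stands for
  the positive integer i+1); polynomials in t with coefficients in R^infty_0 are functions
  f :: nat => nat => 'a, where f k is the coefficient of t^k.\<close>

definition fin_seq :: "(nat \<Rightarrow> 'a::zero) \<Rightarrow> bool" where
  "fin_seq v \<longleftrightarrow> finite {i. v i \<noteq> 0}"

definition fin_col_mat :: "(nat \<Rightarrow> nat \<Rightarrow> 'a::zero) \<Rightarrow> bool" where
  "fin_col_mat A \<longleftrightarrow> (\<forall>j. finite {i. A i j \<noteq> 0})"

definition poly_seq :: "(nat \<Rightarrow> nat \<Rightarrow> 'a::zero) \<Rightarrow> bool" where
  "poly_seq f \<longleftrightarrow> finite {(k, i). f k i \<noteq> 0}"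

definition strict_upper :: "(nat \<Rightarrow> nat \<Rightarrow> 'a::zero) \<Rightarrow> bool" where
  "strict_upper A \<longleftrightarrow> (\<forall>i j. j \<le> i \<longrightarrow> A i j = 0)"

definition id_mat :: "nat \<Rightarrow> nat \<Rightarrow> 'a::{zero,one}" where
  "id_mat i j = (if i = j then 1 else 0)"

definition mat_sub :: "(nat \<Rightarrow> nat \<Rightarrow> 'a::minus) \<Rightarrow> (nat \<Rightarrow> nat \<Rightarrow> 'a) \<Rightarrow> nat \<Rightarrow> nat \<Rightarrow> 'a" where
  "mat_sub A B i j = A i j - B i j"

definition mat_app :: "(nat \<Rightarrow> nat \<Rightarrow> 'a::comm_ring_1) \<Rightarrow> (nat \<Rightarrow> 'a) \<Rightarrow> nat \<Rightarrow> 'a" where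
  "mat_app A v i = (\<Sum>j\<in>{j. v j \<noteq> 0}. A i j * v j)"

definition solves_ode ::
  "(nat \<Rightarrow> nat \<Rightarrow> 'a::comm_ring_1) \<Rightarrow> (nat \<Rightarrow> nat \<Rightarrow> 'a) \<Rightarrow> (nat \<Rightarrow> nat \<Rightarrow> 'a) \<Rightarrow> bool" where
  "solves_ode A g f \<longleftrightarrow>
     (\<forall>k i. of_nat (Suc k) * f (Suc k) i = mat_app A (f k) i + g k i)"

end

theory Submission
  imports Defs
begin


lemma supp_bound: assumes "fin_seq v" shows "\<exists>M. \<forall>i\<ge>M. v i = 0"
proof -
  from assms obtain M where "\<forall>i\<in>{i. v i \<noteq> 0}. i < M"
    unfolding fin_seq_def using finite_nat_set_iff_bounded by blast
  thus ?thesis using not_le by auto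
qed

lemma mat_app_superset:
  assumes "finite S" "{j. v j \<noteq> 0} \<subseteq> S"
  shows "mat_app A v i = (\<Sum>j\<in>S. A i j * v j)"
  unfolding mat_app_def by (rule sum.mono_neutral_left) (use assms in auto)

lemma fin_seq_lin: "fin_seq u \<Longrightarrow> fin_seq v \<Longrightarrow> fin_seq (\<lambda>j. c * u j + (v j::'a::comm_ring_1))"
  unfolding fin_seq_def by (rule finite_subset[of _ "{j. u j \<noteq> 0} \<union> {j. v j \<noteq> 0}"]) auto

lemma fin_seq_scale: "fin_seq u \<Longrightarrow> fin_seq (\<lambda>j. scaleR r (u j::'a::real_vector))"
  unfolding fin_seq_def by (rule finite_subset[of _ "{j. u j \<noteq> 0}"]) auto

lemma mat_app_lin:
  fixes A :: "nat \<Rightarrow> nat \<Rightarrow> 'a::comm_ring_1"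
  assumes "fin_seq u" "fin_seq v"
  shows "mat_app A (\<lambda>j. c * u j + v j) i = c * mat_app A u i + mat_app A v i"
proof -
  let ?S = "{j. u j \<noteq> 0} \<union> {j. v j \<noteq> 0}"
  have f: "finite ?S" using assms unfolding fin_seq_def by auto
  have "mat_app A (\<lambda>j. c * u j + v j) i = (\<Sum>j\<in>?S. A i j * (c * u j + v j))"
    by (rule mat_app_superset[OF f]) auto
  also have "\<dots> = c * (\<Sum>j\<in>?S. A i j * u j) + (\<Sum>j\<in>?S. A i j * v j)"
    by (simp add: sum_distrib_left sum.distrib algebra_simps)
  also have "\<dots> = c * mat_app A u i + mat_app A v i"
    using mat_app_superset[OF f, of u A i] mat_app_superset[OF f, of v A i] by auto
  finally show ?thesis .
qed

lemma mat_app_diff: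
  fixes A :: "nat \<Rightarrow> nat \<Rightarrow> 'a::comm_ring_1"
  assumes "fin_seq u" "fin_seq v"
  shows "mat_app A (\<lambda>j. u j - v j) i = mat_app A u i - mat_app A v i"
proof -
  let ?S = "{j. u j \<noteq> 0} \<union> {j. v j \<noteq> 0}"
  have f: "finite ?S" using assms unfolding fin_seq_def by auto
  have "mat_app A (\<lambda>j. u j - v j) i = (\<Sum>j\<in>?S. A i j * (u j - v j))"
    by (rule mat_app_superset[OF f]) auto
  also have "\<dots> = (\<Sum>j\<in>?S. A i j * u j) - (\<Sum>j\<in>?S. A i j * v j)"
    by (simp add: sum_subtractf algebra_simps)
  also have "\<dots> = mat_app A u i - mat_app A v i"
    using mat_app_superset[OF f, of u A i] mat_app_superset[OF f, of v A i] by auto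
  finally show ?thesis .
qed

lemma mat_app_zero: "mat_app A (\<lambda>j. 0) i = 0"
  by (simp add: mat_app_def)

lemma poly_fin: "poly_seq f \<Longrightarrow> fin_seq (f k)"
  unfolding poly_seq_def fin_seq_def
proof -
  assume a: "finite {(k, i). f k i \<noteq> 0}"
  have "{i. f k i \<noteq> 0} = Pair k -` {(k, i). f k i \<noteq> 0}" by auto
  moreover have "finite (Pair k -` {(k, i). f k i \<noteq> 0})"
    by (rule finite_vimageI[OF a]) (auto simp: inj_on_def)
  ultimately show "finite {i. f k i \<noteq> 0}" by simp
qed

lemma poly_char: "poly_seq f \<longleftrightarrow> (\<exists>N. \<forall>k\<ge>N. \<forall>i. f k i = 0) \<and> (\<forall>k. fin_seq (f k))"
proof
  assume a: "poly_seq f"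
  let ?P = "{(k, i). f k i \<noteq> 0}"
  have "finite (fst ` ?P)" using a unfolding poly_seq_def by auto
  then obtain N where N: "\<forall>k\<in>fst ` ?P. k < N" using finite_nat_set_iff_bounded by blast
  have "\<forall>k\<ge>N. \<forall>i. f k i = 0"
  proof (intro allI impI)
    fix k i assume "k \<ge> N"
    show "f k i = 0"
    proof (rule ccontr)
      assume "f k i \<noteq> 0"
      then have "k \<in> fst ` ?P" by force
      with N \<open>k \<ge> N\<close> show False by auto
    qed
  qed
  then show "(\<exists>N. \<forall>k\<ge>N. \<forall>i. f k i = 0) \<and> (\<forall>k. fin_seq (f k))" using poly_fin[OF a] by blast
next
  assume "(\<exists>N. \<forall>k\<ge>N. \<forall>i. f k i = 0) \<and> (\<forall>k. fin_seq (f k))"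
  then obtain N where N: "\<forall>k\<ge>N. \<forall>i. f k i = 0" and F: "\<forall>k. fin_seq (f k)" by blast
  have "{(k, i). f k i \<noteq> 0} \<subseteq> (\<Union>k<N. {k} \<times> {i. f k i \<noteq> 0})"
    using N by (auto simp: not_le[symmetric])
  moreover have "finite (\<Union>k<N. {k} \<times> {i. f k i \<noteq> 0})"
    using F unfolding fin_seq_def by auto
  ultimately show "poly_seq f" unfolding poly_seq_def by (rule finite_subset)
qed

lemma poly_lin: "poly_seq f \<Longrightarrow> poly_seq g \<Longrightarrow> poly_seq (\<lambda>k i. c * f k i + (g k i::'a::comm_ring_1))"
  unfolding poly_seq_def
  by (rule finite_subset[of _ "{(k, i). f k i \<noteq> 0} \<union> {(k, i). g k i \<noteq> 0}"]) auto

lemma solves_lin: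
  fixes A :: "nat \<Rightarrow> nat \<Rightarrow> 'a::comm_ring_1"
  assumes "poly_seq f1" "poly_seq f2" "solves_ode A g1 f1" "solves_ode A g2 f2"
  shows "solves_ode A (\<lambda>k i. c * g1 k i + g2 k i) (\<lambda>k i. c * f1 k i + f2 k i)"
  unfolding solves_ode_def
proof (intro allI)
  fix k i
  have "of_nat (Suc k) * (c * f1 (Suc k) i + f2 (Suc k) i)
      = c * (of_nat (Suc k) * f1 (Suc k) i) + of_nat (Suc k) * f2 (Suc k) i"
    by (simp add: algebra_simps)
  also have "\<dots> = c * (mat_app A (f1 k) i + g1 k i) + (mat_app A (f2 k) i + g2 k i)"
    using assms(3,4) unfolding solves_ode_def by simp
  also have "\<dots> = mat_app A (\<lambda>j. c * f1 k j + f2 k j) i + (c * g1 k i + g2 k i)"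
    using mat_app_lin[OF poly_fin[OF assms(1), of k] poly_fin[OF assms(2), of k], of A c i]
    by (simp add: algebra_simps)
  finally show "of_nat (Suc k) * (c * f1 (Suc k) i + f2 (Suc k) i)
      = mat_app A (\<lambda>j. c * f1 k j + f2 k j) i + (c * g1 k i + g2 k i)" .
qed

lemma solves_diff:
  fixes A :: "nat \<Rightarrow> nat \<Rightarrow> 'a::comm_ring_1"
  assumes "poly_seq f1" "poly_seq f2" "solves_ode A g f1" "solves_ode A g f2"
  shows "solves_ode A (\<lambda>k i. 0) (\<lambda>k i. f1 k i - f2 k i)"
  unfolding solves_ode_def
proof (intro allI)
  fix k i
  have "of_nat (Suc k) * (f1 (Suc k) i - f2 (Suc k) i)
      = (of_nat (Suc k) * f1 (Suc k) i) - of_nat (Suc k) * f2 (Suc k) i"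
    by (simp add: algebra_simps)
  also have "\<dots> = (mat_app A (f1 k) i + g k i) - (mat_app A (f2 k) i + g k i)"
    using assms(3,4) unfolding solves_ode_def by simp
  also have "\<dots> = mat_app A (\<lambda>j. f1 k j - f2 k j) i + 0"
    using mat_app_diff[OF poly_fin[OF assms(1), of k] poly_fin[OF assms(2), of k], of A i]
    by (simp add: algebra_simps)
  finally show "of_nat (Suc k) * (f1 (Suc k) i - f2 (Suc k) i)
      = mat_app A (\<lambda>j. f1 k j - f2 k j) i + 0" .
qed

lemma mat_app_fin:
  assumes "fin_col_mat A" "fin_seq v"
  shows "fin_seq (mat_app A v)"
proof -
  have "{i. mat_app A v i \<noteq> 0} \<subseteq> (\<Union>j\<in>{j. v j \<noteq> 0}. {i. A i j \<noteq> 0})"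
  proof
    fix i assume "i \<in> {i. mat_app A v i \<noteq> 0}"
    then have "(\<Sum>j\<in>{j. v j \<noteq> 0}. A i j * v j) \<noteq> 0" by (simp add: mat_app_def)
    then obtain j where "j \<in> {j. v j \<noteq> 0}" "A i j * v j \<noteq> 0" by (meson sum.neutral)
    then show "i \<in> (\<Union>j\<in>{j. v j \<noteq> 0}. {i. A i j \<noteq> 0})" by auto
  qed
  moreover have "finite (\<Union>j\<in>{j. v j \<noteq> 0}. {i. A i j \<noteq> 0})"
    using assms unfolding fin_seq_def fin_col_mat_def by auto
  ultimately show ?thesis unfolding fin_seq_def by (rule finite_subset)
qed

lemma mat_app_bound:
  assumes "strict_upper A" "\<forall>j\<ge>M. v j = 0" "i \<ge> M - 1"
  shows "mat_app A v i = 0"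
  unfolding mat_app_def
proof (rule sum.neutral, intro ballI)
  fix j assume "j \<in> {j. v j \<noteq> 0}"
  then have "j < M" using assms(2) by (meson mem_Collect_eq not_le)
  then have "j \<le> i" using assms(3) by linarith
  then show "A i j * v j = 0" using assms(1) unfolding strict_upper_def by simp
qed

lemma ofnat_scaleR: "of_nat n * (x::'a::real_algebra_1) = scaleR (real n) x"
  by (simp add: scaleR_conv_of_real)

lemma ofnat_scale: "of_nat (Suc k) * scaleR (1 / real (Suc k)) x = (x::'a::real_algebra_1)"
  by (simp only: ofnat_scaleR scaleR_scaleR) simp

lemma ofnat_cancel: "of_nat (Suc k) * x = y \<Longrightarrow> x = scaleR (1 / real (Suc k)) (y::'a::real_algebra_1)"
  by (simp only: ofnat_scaleR scaleR_scaleR flip: ) (auto simp: scaleR_scaleR)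

lemma U_props:
  fixes A :: "nat \<Rightarrow> nat \<Rightarrow> 'a::comm_ring_1"
  assumes "strict_upper (mat_sub A id_mat)"
  shows "A i i = 1" "j < i \<Longrightarrow> A i j = 0"
proof -
  have e: "A i' j' = id_mat i' j'" if "j' \<le> i'" for i' j'
  proof -
    have "A i' j' - id_mat i' j' = 0" using assms that unfolding strict_upper_def mat_sub_def by blast
    then show ?thesis by simp
  qed
  show "A i i = 1" using e[of i i] by (simp add: id_mat_def)
  show "j < i \<Longrightarrow> A i j = 0" using e[of j i] by (simp add: id_mat_def)
qed

lemma inj_i:
  fixes A :: "nat \<Rightarrow> nat \<Rightarrow> 'a::comm_ring_1"
  assumes U: "strict_upper (mat_sub A id_mat)" and fv: "fin_seq v" and z: "\<forall>i. mat_app A v i = 0"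
  shows "v = (\<lambda>i. 0)"
proof (rule ccontr)
  assume "v \<noteq> (\<lambda>i. 0)"
  then have ne: "{i. v i \<noteq> 0} \<noteq> {}" by auto
  have fin: "finite {i. v i \<noteq> 0}" using fv unfolding fin_seq_def .
  define m where "m = Max {i. v i \<noteq> 0}"
  have mi: "m \<in> {i. v i \<noteq> 0}" using Max_in[OF fin ne] unfolding m_def .
  have le: "\<And>j. j \<in> {i. v i \<noteq> 0} \<Longrightarrow> j \<le> m" using Max_ge[OF fin] unfolding m_def by blast
  have "mat_app A v m = (\<Sum>j\<in>{i. v i \<noteq> 0}. A m j * v j)" by (simp add: mat_app_def)
  also have "\<dots> = (\<Sum>j\<in>{i. v i \<noteq> 0}. if j = m then v m else 0)"
  proof (rule sum.cong[OF refl])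
    fix j assume j: "j \<in> {i. v i \<noteq> 0}"
    show "A m j * v j = (if j = m then v m else 0)"
    proof (cases "j = m")
      case True then show ?thesis using U_props(1)[OF U] by simp
    next
      case False then have "j < m" using le[OF j] by simp
      then show ?thesis using U_props(2)[OF U] False by simp
    qed
  qed
  also have "\<dots> = v m" using fin mi by simp
  finally show False using z mi by simp
qed

lemma surj_i:
  fixes A :: "nat \<Rightarrow> nat \<Rightarrow> 'a::comm_ring_1"
  assumes U: "strict_upper (mat_sub A id_mat)"
  shows "\<forall>w. (\<forall>i\<ge>m. w i = 0) \<longrightarrow> (\<exists>v. fin_seq v \<and> (\<forall>i. mat_app A v i = w i))"
proof (induction m)
  case 0
  show ?case
  proof (intro allI impI)
    fix w :: "nat \<Rightarrow> 'a" assume "\<forall>i\<ge>0. w i = 0"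
    then show "\<exists>v. fin_seq v \<and> (\<forall>i. mat_app A v i = w i)"
      by (intro exI[of _ "\<lambda>i. 0"]) (simp add: fin_seq_def mat_app_zero)
  qed
next
  case (Suc m)
  show ?case
  proof (intro allI impI)
    fix w :: "nat \<Rightarrow> 'a" assume w: "\<forall>i\<ge>Suc m. w i = 0"
    define w' where "w' i = w i - A i m * w m" for i
    have "\<forall>i\<ge>m. w' i = 0"
    proof (intro allI impI)
      fix i assume "m \<le> i"
      then consider "i = m" | "m < i" by linarith
      then show "w' i = 0"
      proof cases
        case 1 then show ?thesis unfolding w'_def using U_props(1)[OF U] by simp
      next
        case 2 then show ?thesis unfolding w'_def using U_props(2)[OF U] w by simp
      qed
    qed
    then obtain v1 where v1: "fin_seq v1" "\<forall>i. mat_app A v1 i = w' i" using Suc.IH by blast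
    define v0 where "v0 j = (if j = m then w m else 0)" for j
    have f0: "fin_seq v0" unfolding fin_seq_def v0_def
      by (rule finite_subset[of _ "{m}"]) auto
    have m0: "mat_app A v0 i = A i m * w m" for i
    proof -
      have "mat_app A v0 i = (\<Sum>j\<in>{m}. A i j * v0 j)"
        by (rule mat_app_superset) (auto simp: v0_def)
      then show ?thesis by (simp add: v0_def)
    qed
    show "\<exists>v. fin_seq v \<and> (\<forall>i. mat_app A v i = w i)"
    proof (intro exI[of _ "\<lambda>j. 1 * v0 j + v1 j"] conjI allI)
      show "fin_seq (\<lambda>j. 1 * v0 j + v1 j)" by (rule fin_seq_lin[OF f0 v1(1)])
      fix i
      show "mat_app A (\<lambda>j. 1 * v0 j + v1 j) i = w i"
        using mat_app_lin[OF f0 v1(1), of A 1 i] m0 v1(2) unfolding w'_def by simp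
    qed
  qed
qed

lemma surj_i':
  fixes A :: "nat \<Rightarrow> nat \<Rightarrow> 'a::comm_ring_1"
  assumes U: "strict_upper (mat_sub A id_mat)" and "fin_seq w"
  shows "\<exists>v. fin_seq v \<and> (\<forall>i. mat_app A v i = w i)"
  using surj_i[OF U] supp_bound[OF assms(2)] by blast

lemma exist_i:
  fixes A :: "nat \<Rightarrow> nat \<Rightarrow> 'a::{comm_ring_1, real_algebra_1}"
  assumes U: "strict_upper (mat_sub A id_mat)"
  shows "\<forall>s g. (\<forall>k\<ge>N. \<forall>i. g k i = 0) \<longrightarrow> (\<forall>k. fin_seq (g k)) \<longrightarrow>
     (\<exists>f. (\<forall>k\<ge>N. \<forall>i. f k i = 0) \<and> (\<forall>k. fin_seq (f k)) \<and>
          (\<forall>k i. of_nat (k + 1 + s) * f (Suc k) i = mat_app A (f k) i + g k i))"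
proof (induction N)
  case 0
  show ?case
    by (intro allI impI, rule exI[of _ "\<lambda>k i. 0"]) (simp add: fin_seq_def mat_app_zero)
next
  case (Suc N)
  show ?case
  proof (intro allI impI)
    fix s and g :: "nat \<Rightarrow> nat \<Rightarrow> 'a"
    assume gb: "\<forall>k\<ge>Suc N. \<forall>i. g k i = 0" and gf: "\<forall>k. fin_seq (g k)"
    have "\<forall>k\<ge>N. \<forall>i. g (Suc k) i = 0" using gb by simp
    moreover have "\<forall>k. fin_seq (g (Suc k))" using gf by simp
    ultimately obtain f' where f'b: "\<forall>k\<ge>N. \<forall>i. f' k i = 0" and f'f: "\<forall>k. fin_seq (f' k)"
      and f'e: "\<forall>k i. of_nat (k + 1 + Suc s) * f' (Suc k) i = mat_app A (f' k) i + g (Suc k) i"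
      using Suc.IH[rule_format, of "\<lambda>k. g (Suc k)" "Suc s"] by blast
    define w where "w i = of_nat (1 + s) * f' 0 i - g 0 i" for i
    have "fin_seq w" unfolding fin_seq_def w_def
      by (rule finite_subset[of _ "{i. f' 0 i \<noteq> 0} \<union> {i. g 0 i \<noteq> 0}"])
        (use f'f gf in \<open>auto simp: fin_seq_def\<close>)
    then obtain v0 where v0: "fin_seq v0" "\<forall>i. mat_app A v0 i = w i" using surj_i'[OF U] by blast
    define f where "f k = (case k of 0 \<Rightarrow> v0 | Suc k' \<Rightarrow> f' k')" for k
    show "\<exists>f. (\<forall>k\<ge>Suc N. \<forall>i. f k i = 0) \<and> (\<forall>k. fin_seq (f k)) \<and>
          (\<forall>k i. of_nat (k + 1 + s) * f (Suc k) i = mat_app A (f k) i + g k i)"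
    proof (intro exI[of _ f] conjI allI impI)
      fix k i assume "Suc N \<le> k"
      then show "f k i = 0" using f'b by (cases k) (auto simp: f_def)
    next
      fix k show "fin_seq (f k)" using f'f v0 by (cases k) (auto simp: f_def)
    next
      fix k i show "of_nat (k + 1 + s) * f (Suc k) i = mat_app A (f k) i + g k i"
      proof (cases k)
        case 0 then show ?thesis using v0(2) by (simp add: f_def w_def)
      next
        case (Suc k') then show ?thesis using f'e[rule_format, of k' i] by (simp add: f_def)
      qed
    qed
  qed
qed

lemma uniq_i:
  fixes A :: "nat \<Rightarrow> nat \<Rightarrow> 'a::comm_ring_1"
  assumes U: "strict_upper (mat_sub A id_mat)" and hp: "poly_seq h"
    and hs: "solves_ode A (\<lambda>k i. 0) h"
  shows "h = (\<lambda>k i. 0)"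
proof (rule ccontr)
  assume "h \<noteq> (\<lambda>k i. 0)"
  then have ne: "{k. \<exists>i. h k i \<noteq> 0} \<noteq> {}" by (auto simp: fun_eq_iff)
  obtain N where N: "\<forall>k\<ge>N. \<forall>i. h k i = 0" using hp unfolding poly_char by blast
  have fin: "finite {k. \<exists>i. h k i \<noteq> 0}"
    by (rule bounded_nat_set_is_finite[of _ N]) (use N not_le in auto)
  define m where "m = Max {k. \<exists>i. h k i \<noteq> 0}"
  have mi: "m \<in> {k. \<exists>i. h k i \<noteq> 0}" using Max_in[OF fin ne] unfolding m_def .
  have "Suc m \<notin> {k. \<exists>i. h k i \<noteq> 0}"
    using Max_ge[OF fin, of "Suc m"] unfolding m_def by auto
  then have "\<forall>i. h (Suc m) i = 0" by simp
  then have "\<forall>i. mat_app A (h m) i = 0" using hs unfolding solves_ode_def by (metis add_0_right mult_zero_right)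
  then have "h m = (\<lambda>i. 0)" using inj_i[OF U poly_fin[OF hp]] by blast
  then show False using mi by simp
qed

primrec solF :: "(nat \<Rightarrow> nat \<Rightarrow> 'a::{comm_ring_1, real_algebra_1}) \<Rightarrow> (nat \<Rightarrow> 'a) \<Rightarrow> (nat \<Rightarrow> nat \<Rightarrow> 'a) \<Rightarrow> nat \<Rightarrow> nat \<Rightarrow> 'a" where
  "solF A f0 g 0 = f0"
| "solF A f0 g (Suc k) = (\<lambda>i. scaleR (1 / real (Suc k)) (mat_app A (solF A f0 g k) i + g k i))"

lemma solF_solves: "solves_ode A g (solF A f0 g)"
  unfolding solves_ode_def
proof (intro allI)
  fix k i
  have "solF A f0 g (Suc k) i = scaleR (1 / real (Suc k)) (mat_app A (solF A f0 g k) i + g k i)" by simp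
  then show "of_nat (Suc k) * solF A f0 g (Suc k) i = mat_app A (solF A f0 g k) i + g k i"
    by (simp only: ofnat_scale)
qed

lemma solF_fin:
  assumes "fin_col_mat A" "fin_seq f0" "poly_seq g"
  shows "fin_seq (solF A f0 g k)"
proof (induction k)
  case 0 then show ?case using assms by simp
next
  case (Suc k)
  have "fin_seq (\<lambda>i. 1 * mat_app A (solF A f0 g k) i + g k i)"
    by (rule fin_seq_lin[OF mat_app_fin[OF assms(1) Suc] poly_fin[OF assms(3)]])
  then show ?case using fin_seq_scale by simp
qed

lemma solF_poly:
  assumes A: "fin_col_mat A" "strict_upper A" and "fin_seq f0" "poly_seq g"
  shows "poly_seq (solF A f0 g)"
proof -
  obtain N where N: "\<forall>k\<ge>N. \<forall>i. g k i = 0" using assms(4) unfolding poly_char by blast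
  obtain M where M: "\<forall>i\<ge>M. solF A f0 g N i = 0" using supp_bound[OF solF_fin[OF A(1) assms(3,4)]] by blast
  have claim: "\<forall>i\<ge>M - n. solF A f0 g (N + n) i = 0" for n
  proof (induction n)
    case 0 then show ?case using M by simp
  next
    case (Suc n)
    show ?case
    proof (intro allI impI)
      fix i assume "M - Suc n \<le> i"
      then have "i \<ge> (M - n) - 1" by linarith
      then have "mat_app A (solF A f0 g (N + n)) i = 0" by (rule mat_app_bound[OF A(2) Suc.IH])
      then show "solF A f0 g (N + Suc n) i = 0" using N by simp
    qed
  qed
  have "\<forall>k\<ge>N + M. \<forall>i. solF A f0 g k i = 0"
  proof (intro allI impI)
    fix k i assume "N + M \<le> k"
    then have "k = N + (k - N)" "M - (k - N) = 0" by auto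
    then show "solF A f0 g k i = 0" using claim[of "k - N"] by (metis le0)
  qed
  then show ?thesis unfolding poly_char using solF_fin[OF A(1) assms(3,4)] by blast
qed

lemma solF_uniq:
  assumes "solves_ode A g f" "f 0 = f0"
  shows "f = solF A f0 g"
proof (rule ext)
  fix k show "f k = solF A f0 g k"
  proof (induction k)
    case 0 then show ?case using assms by simp
  next
    case (Suc k)
    show ?case
    proof (rule ext)
      fix i
      have "of_nat (Suc k) * f (Suc k) i = mat_app A (f k) i + g k i"
        using assms(1) unfolding solves_ode_def by blast
      then have "f (Suc k) i = scaleR (1 / real (Suc k)) (mat_app A (f k) i + g k i)"
        by (rule ofnat_cancel)
      then show "f (Suc k) i = solF A f0 g (Suc k) i" using Suc by simp
    qed
  qed
qed

theorem lemma6p2: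
  fixes A :: "nat \<Rightarrow> nat \<Rightarrow> 'a::{comm_ring_1, real_algebra_1}"
  assumes "fin_col_mat A"
  shows
   "(strict_upper (mat_sub A id_mat) \<longrightarrow>
      (\<exists>S. (\<forall>g. poly_seq g \<longrightarrow>
               poly_seq (S g) \<and> solves_ode A g (S g) \<and>
               (\<forall>f. poly_seq f \<and> solves_ode A g f \<longrightarrow> f = S g)) \<and>
           (\<forall>c g1 g2. poly_seq g1 \<longrightarrow> poly_seq g2 \<longrightarrow>
               S (\<lambda>k i. c * g1 k i + g2 k i) = (\<lambda>k i. c * S g1 k i + S g2 k i))))
    \<and>
    (strict_upper A \<longrightarrow>
      (\<exists>S. (\<forall>f0 g. fin_seq f0 \<longrightarrow> poly_seq g \<longrightarrow>
               poly_seq (S f0 g) \<and> solves_ode A g (S f0 g) \<and> S f0 g 0 = f0 \<and>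
               (\<forall>f. poly_seq f \<and> solves_ode A g f \<and> f 0 = f0 \<longrightarrow> f = S f0 g)) \<and>
           (\<forall>c f0 f0' g1 g2. fin_seq f0 \<longrightarrow> fin_seq f0' \<longrightarrow> poly_seq g1 \<longrightarrow> poly_seq g2 \<longrightarrow>
               S (\<lambda>i. c * f0 i + f0' i) (\<lambda>k i. c * g1 k i + g2 k i)
                 = (\<lambda>k i. c * S f0 g1 k i + S f0' g2 k i))))"
proof (intro conjI impI)
  assume U: "strict_upper (mat_sub A id_mat)"
  have ex: "\<exists>!f. poly_seq f \<and> solves_ode A g f" if g: "poly_seq g" for g :: "nat \<Rightarrow> nat \<Rightarrow> 'a"
  proof -
    obtain N where N: "\<forall>k\<ge>N. \<forall>i. g k i = 0" and gf: "\<forall>k. fin_seq (g k)"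
      using g unfolding poly_char by blast
    obtain f where fb: "\<forall>k\<ge>N. \<forall>i. f k i = 0" and ff: "\<forall>k. fin_seq (f k)"
      and fe: "\<forall>k i. of_nat (k + 1 + 0) * f (Suc k) i = mat_app A (f k) i + g k i"
      using exist_i[OF U, rule_format, of N g 0] N gf by blast
    have p: "poly_seq f" unfolding poly_char using fb ff by blast
    have s: "solves_ode A g f" unfolding solves_ode_def using fe by simp
    show ?thesis
    proof (rule ex1I[of _ f])
      show "poly_seq f \<and> solves_ode A g f" using p s by blast
      fix f2 assume f2: "poly_seq f2 \<and> solves_ode A g f2"
      have "(\<lambda>k i. f2 k i - f k i) = (\<lambda>k i. 0)"
      proof (rule uniq_i[OF U])
        have "poly_seq (\<lambda>k i. (-1) * f k i + f2 k i)" using poly_lin p f2 by blast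
        then show "poly_seq (\<lambda>k i. f2 k i - f k i)" by simp
        show "solves_ode A (\<lambda>k i. 0) (\<lambda>k i. f2 k i - f k i)"
          using solves_diff[of f2 f A g] f2 p s by blast
      qed
      then show "f2 = f" by (auto simp: fun_eq_iff)
    qed
  qed
  define S where "S g = (THE f. poly_seq f \<and> solves_ode A g f)" for g
  have Sp: "poly_seq (S g) \<and> solves_ode A g (S g)" if "poly_seq g" for g :: "nat \<Rightarrow> nat \<Rightarrow> 'a"
    unfolding S_def using theI'[OF ex[OF that]] .
  have Su: "f = S g" if "poly_seq g" "poly_seq f" "solves_ode A g f" for f g :: "nat \<Rightarrow> nat \<Rightarrow> 'a"
    using ex[OF that(1)] Sp[OF that(1)] that(2,3) by blast
  show "\<exists>S. (\<forall>g. poly_seq g \<longrightarrow>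
               poly_seq (S g) \<and> solves_ode A g (S g) \<and>
               (\<forall>f. poly_seq f \<and> solves_ode A g f \<longrightarrow> f = S g)) \<and>
           (\<forall>c g1 g2. poly_seq g1 \<longrightarrow> poly_seq g2 \<longrightarrow>
               S (\<lambda>k i. c * g1 k i + g2 k i) = (\<lambda>k i. c * S g1 k i + S g2 k i))"
  proof (intro exI[of _ S] conjI allI impI)
    fix g :: "nat \<Rightarrow> nat \<Rightarrow> 'a" assume "poly_seq g"
    then show "poly_seq (S g)" "solves_ode A g (S g)" using Sp by auto
  next
    fix g f :: "nat \<Rightarrow> nat \<Rightarrow> 'a" assume "poly_seq g" "poly_seq f \<and> solves_ode A g f"
    then show "f = S g" using Su by blast
  next
    fix c and g1 g2 :: "nat \<Rightarrow> nat \<Rightarrow> 'a" assume g1: "poly_seq g1" and g2: "poly_seq g2"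
    have "(\<lambda>k i. c * S g1 k i + S g2 k i) = S (\<lambda>k i. c * g1 k i + g2 k i)"
    proof (rule Su)
      show "poly_seq (\<lambda>k i. c * g1 k i + g2 k i)" by (rule poly_lin[OF g1 g2])
      show "poly_seq (\<lambda>k i. c * S g1 k i + S g2 k i)"
        by (rule poly_lin) (use Sp[OF g1] Sp[OF g2] in blast)+
      show "solves_ode A (\<lambda>k i. c * g1 k i + g2 k i) (\<lambda>k i. c * S g1 k i + S g2 k i)"
        by (rule solves_lin) (use Sp[OF g1] Sp[OF g2] in blast)+
    qed
    then show "S (\<lambda>k i. c * g1 k i + g2 k i) = (\<lambda>k i. c * S g1 k i + S g2 k i)" by (rule sym)
  qed
next
  assume U: "strict_upper A"
  show "\<exists>S. (\<forall>f0 g. fin_seq f0 \<longrightarrow> poly_seq g \<longrightarrow>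
               poly_seq (S f0 g) \<and> solves_ode A g (S f0 g) \<and> S f0 g 0 = f0 \<and>
               (\<forall>f. poly_seq f \<and> solves_ode A g f \<and> f 0 = f0 \<longrightarrow> f = S f0 g)) \<and>
           (\<forall>c f0 f0' g1 g2. fin_seq f0 \<longrightarrow> fin_seq f0' \<longrightarrow> poly_seq g1 \<longrightarrow> poly_seq g2 \<longrightarrow>
               S (\<lambda>i. c * f0 i + f0' i) (\<lambda>k i. c * g1 k i + g2 k i)
                 = (\<lambda>k i. c * S f0 g1 k i + S f0' g2 k i))"
  proof (intro exI[of _ "solF A"] conjI allI impI)
    fix f0 :: "nat \<Rightarrow> 'a" and g :: "nat \<Rightarrow> nat \<Rightarrow> 'a" assume f0: "fin_seq f0" and g: "poly_seq g"
    show "poly_seq (solF A f0 g)" by (rule solF_poly[OF assms U f0 g])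
    show "solves_ode A g (solF A f0 g)" by (rule solF_solves)
    show "solF A f0 g 0 = f0" by simp
    fix f :: "nat \<Rightarrow> nat \<Rightarrow> 'a" assume "poly_seq f \<and> solves_ode A g f \<and> f 0 = f0"
    then have "solves_ode A g f" "f 0 = f0" by auto
    then show "f = solF A f0 g" by (rule solF_uniq)
  next
    fix c and f0 f0' :: "nat \<Rightarrow> 'a" and g1 g2 :: "nat \<Rightarrow> nat \<Rightarrow> 'a" assume f0: "fin_seq f0" and f0': "fin_seq f0'"
      and g1: "poly_seq g1" and g2: "poly_seq g2"
    have "(\<lambda>k i. c * solF A f0 g1 k i + solF A f0' g2 k i)
        = solF A (\<lambda>i. c * f0 i + f0' i) (\<lambda>k i. c * g1 k i + g2 k i)"
    proof (rule solF_uniq)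
      show "solves_ode A (\<lambda>k i. c * g1 k i + g2 k i) (\<lambda>k i. c * solF A f0 g1 k i + solF A f0' g2 k i)"
        by (rule solves_lin[OF solF_poly[OF assms U f0 g1] solF_poly[OF assms U f0' g2]
              solF_solves solF_solves])
      show "(\<lambda>k i. c * solF A f0 g1 k i + solF A f0' g2 k i) 0 = (\<lambda>i. c * f0 i + f0' i)" by simp
    qed
    then show "solF A (\<lambda>i. c * f0 i + f0' i) (\<lambda>k i. c * g1 k i + g2 k i)
        = (\<lambda>k i. c * solF A f0 g1 k i + solF A f0' g2 k i)" by (rule sym)
  qed
qed

end
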